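(* Let $C\ge 2$ and let $\mathbf{o}_m,\mathbf{o}_n\in\mathbb{R}^C$ be logit vectors with $\mathbf{s}_m=\mathrm{softmax}(\mathbf{o}_m)$, $\mathbf{s}_n=\mathrm{softmax}(\mathbf{o}_n)$. Define the KL loss $$\mathcal{L}_{KL}(\mathbf{o}_m,\mathbf{o}_n)=\sum_{j=1}^C \mathbf{s}_m^j\log\frac{\mathbf{s}_m^j}{\mathbf{s}_n^j}.$$ Fix a point $(\bar{\mathbf{o}}_m,\bar{\mathbf{o}}_n)\in\mathbb{R}^C\times\mathbb{R}^C$, and let $\bar{\mathbf{s}}_m=\mathrm{softmax}(\bar{\mathbf{o}}_m)$, $\bar{\mathbf{w}}^{j,k}=\bar{\mathbf{s}}_m^j\bar{\mathbf{s}}_m^k$, $\overline{\Delta\mathbf{n}}_{j,k}=\bar{\mathbf{o}}_n^j-\bar{\mathbf{o}}_n^k$. For $\alpha,\beta>0$ define the Decoupled KL (DKL) loss (in which the barred quantities are held constant, i.e. are "stop-gradient" quantities) $$\mathcal{L}_{DKL}(\mathbf{o}_m,\mathbf{o}_n)=\frac{\alpha}{4}\sum_{j=1}^C\sum_{k=1}^C \bar{\mathbf{w}}^{j,k}\big((\mathbf{o}_m^j-\mathbf{o}_m^k)-\overline{\Delta\mathbf{n}}_{j,k}\big)^2\;-\;\beta\sum_{j=1}^C \bar{\mathbf{s}}_m^j\log \mathrm{softmax}(\mathbf{o}_n)^j .$$ Then, when $\alpha=\beta=1$, at the point $(\mathbf{o}_m,\mathbf{o}_n)=(\bar{\mathbf{o}}_m,\bar{\mathbf{o}}_n)$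 we have $$\nabla_{\mathbf{o}_m}\mathcal{L}_{DKL}=\nabla_{\mathbf{o}_m}\mathcal{L}_{KL},\qquad \nabla_{\mathbf{o}_n}\mathcal{L}_{DKL}=\nabla_{\mathbf{o}_n}\mathcal{L}_{KL}.$$ Since $(\bar{\mathbf{o}}_m,\bar{\mathbf{o}}_n)$ is arbitrary, the KL loss and the DKL loss (with $\alpha=\beta=1$) produce identical gradients at every input.
   Context: $\mathrm{softmax}(\mathbf{o})^j=e^{\mathbf{o}^j}/\sum_{k=1}^C e^{\mathbf{o}^k}$. Superscripts $j,k$ denote coordinates (class indices). The "stop-gradient" convention: in $\mathcal{L}_{DKL}$, the weights $\bar{\mathbf{w}}$, the differences $\overline{\Delta\mathbf{n}}$ and the soft labels $\bar{\mathbf{s}}_m$ are evaluated at the point where the gradient is taken and are treated as constants when differentiating. *)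

theory Defs
  imports "HOL-Analysis.Analysis"
begin

text \<open>Logit vectors in R^C are modelled as real^'c with a finite index type 'c, C = CARD('c).\<close>

definition softmax :: "real ^ 'c::finite \<Rightarrow> real ^ 'c" where
  "softmax o' = (\<chi> j. exp (o' $ j) / (\<Sum>k\<in>UNIV. exp (o' $ k)))"

definition L_KL :: "real ^ 'c::finite \<Rightarrow> real ^ 'c \<Rightarrow> real" where
  "L_KL om on = (\<Sum>j\<in>UNIV. softmax om $ j * ln (softmax om $ j / softmax on $ j))"

text \<open>Decoupled KL loss; the barred point (obm, obn) supplies the stop-gradient
  quantities w, Delta n and s_m, which are constants in the variables (om, on).\<close>
definition L_DKL :: "real \<Rightarrow> real \<Rightarrow> real ^ 'c::finite \<Rightarrow> real ^ 'c \<Rightarrow> real ^ 'c \<Rightarrow> real ^ 'c \<Rightarrow> real" where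
  "L_DKL \<alpha> \<beta> obm obn om on =
     \<alpha> / 4 * (\<Sum>j\<in>UNIV. \<Sum>k\<in>UNIV.
        (softmax obm $ j * softmax obm $ k) *
        ((om $ j - om $ k) - (obn $ j - obn $ k))\<^sup>2)
     - \<beta> * (\<Sum>j\<in>UNIV. softmax obm $ j * ln (softmax on $ j))"

end

theory Submission
  imports Defs
begin

lemma vnth_deriv[derivative_intros]: "((\<lambda>x. x $ i) has_derivative (\<lambda>x. x $ i)) F"
  by (rule bounded_linear_imp_has_derivative) (rule bounded_linear_vec_nth)

definition SE :: "real ^ 'c::finite \<Rightarrow> real" where "SE x = (\<Sum>k\<in>UNIV. exp (x $ k))"

lemma SE_pos: "SE (x::real^'c::finite) > 0"
  unfolding SE_def by (intro sum_pos) auto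

lemma softmax_eq: "softmax x $ j = exp (x $ j) / SE x"
  by (simp add: softmax_def SE_def)

lemma softmax_pos: "softmax x $ j > 0"
  using SE_pos[of x] by (simp add: softmax_eq)

lemma softmax_nz[simp]: "softmax x $ j \<noteq> 0"
  using softmax_pos[of x j] by simp

lemma softmax_sum: "(\<Sum>j\<in>UNIV. softmax (x::real^'c::finite) $ j) = 1"
  using SE_pos[of x] by (simp add: softmax_eq sum_divide_distrib[symmetric] SE_def)

lemma ln_softmax: "ln (softmax x $ j) = x $ j - ln (SE x)"
  using SE_pos[of x] by (simp add: softmax_eq ln_div)

lemma SE_deriv: "(SE has_derivative (\<lambda>h. \<Sum>k\<in>UNIV. exp (x $ k) * h $ k)) (at (x::real^'c::finite))"
  unfolding SE_def
  by (auto intro!: derivative_eq_intros simp: mult.commute)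

lemma lnsm_deriv: "((\<lambda>x. ln (softmax x $ j)) has_derivative
    (\<lambda>h. h $ j - (\<Sum>i\<in>UNIV. softmax x $ i * h $ i))) (at (x::real^'c::finite))"
proof -
  have "((\<lambda>x. x $ j - ln (SE x)) has_derivative
    (\<lambda>h. h $ j - (\<Sum>k\<in>UNIV. exp (x $ k) * h $ k) / SE x)) (at x)"
    using SE_pos[of x] by (auto intro!: derivative_eq_intros SE_deriv simp: field_simps)
  moreover have "(\<lambda>h. h $ j - (\<Sum>k\<in>UNIV. exp (x $ k) * h $ k) / SE x)
     = (\<lambda>h. h $ j - (\<Sum>i\<in>UNIV. softmax x $ i * h $ i))"
    by (simp add: softmax_eq sum_divide_distrib)
  ultimately show ?thesis by (simp add: ln_softmax)
qed

lemma sm_deriv: "((\<lambda>x. softmax x $ j) has_derivative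
    (\<lambda>h. softmax x $ j * (h $ j - (\<Sum>i\<in>UNIV. softmax x $ i * h $ i)))) (at (x::real^'c::finite))"
proof -
  have e: "(\<lambda>x. softmax x $ j) = (\<lambda>x. exp (ln (softmax x $ j)))"
    by (rule ext) (simp add: softmax_pos)
  show ?thesis unfolding e
    using has_derivative_exp[OF lnsm_deriv[of j x]] softmax_pos[of x j]
    by (simp add: algebra_simps)
qed

lemma sum_sq_expand:
  fixes s a h :: "'c::finite \<Rightarrow> real"
  assumes "(\<Sum>j\<in>UNIV. s j) = 1"
  shows "(\<Sum>j\<in>UNIV. \<Sum>k\<in>UNIV. s j * s k * ((a j - a k) * (h j - h k)))
       = 2 * (\<Sum>j\<in>UNIV. s j * a j * h j) - 2 * (\<Sum>j\<in>UNIV. s j * a j) * (\<Sum>k\<in>UNIV. s k * h k)"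
proof -
  have e: "s j * s k * ((a j - a k) * (h j - h k)) =
      s k * (s j * a j * h j) + s j * (s k * a k * h k) - (s j * a j) * (s k * h k) - (s k * a k) * (s j * h j)"
    for j k by (simp add: algebra_simps)
  have "(\<Sum>j\<in>UNIV. \<Sum>k\<in>UNIV. s j * s k * ((a j - a k) * (h j - h k)))
     = (\<Sum>j\<in>UNIV. \<Sum>k\<in>UNIV. s k * (s j * a j * h j)) + (\<Sum>j\<in>UNIV. \<Sum>k\<in>UNIV. s j * (s k * a k * h k))
      - (\<Sum>j\<in>UNIV. \<Sum>k\<in>UNIV. (s j * a j) * (s k * h k)) - (\<Sum>j\<in>UNIV. \<Sum>k\<in>UNIV. (s k * a k) * (s j * h j))"
    unfolding e by (simp add: sum.distrib sum_subtractf)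
  also have "\<dots> = 2 * (\<Sum>j\<in>UNIV. s j * a j * h j) - 2 * (\<Sum>j\<in>UNIV. s j * a j) * (\<Sum>k\<in>UNIV. s k * h k)"
    using assms
    by (simp add: sum_distrib_left[symmetric] sum_distrib_right[symmetric] mult.commute)
  finally show ?thesis .
qed

theorem theorem1:
  fixes obm obn :: "real ^ 'c::finite"
  assumes "CARD('c) \<ge> 2"
  shows "(\<exists>g. ((\<lambda>x. L_KL x obn) has_derivative (\<lambda>h. g \<bullet> h)) (at obm)
            \<and> ((\<lambda>x. L_DKL 1 1 obm obn x obn) has_derivative (\<lambda>h. g \<bullet> h)) (at obm))
       \<and> (\<exists>g. ((\<lambda>y. L_KL obm y) has_derivative (\<lambda>h. g \<bullet> h)) (at obn)
            \<and> ((\<lambda>y. L_DKL 1 1 obm obn obm y) has_derivative (\<lambda>h. g \<bullet> h)) (at obn))"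
proof
  define s where "s = softmax obm"
  define t where "t = softmax obn"
  have ssum: "(\<Sum>j\<in>UNIV. s $ j) = 1" unfolding s_def by (rule softmax_sum)
  define a where "a = (\<lambda>j. obm $ j - obn $ j)"
  define A where "A = (\<Sum>j\<in>UNIV. s $ j * a j)"
  define g where "g = (\<chi> j. s $ j * (a j - A))"
  have gi: "g \<bullet> h = (\<Sum>j\<in>UNIV. s $ j * a j * h $ j) - A * (\<Sum>k\<in>UNIV. s $ k * h $ k)" for h
    by (simp add: g_def inner_vec_def algebra_simps sum_subtractf sum_distrib_left)
  show "\<exists>g. ((\<lambda>x. L_KL x obn) has_derivative (\<lambda>h. g \<bullet> h)) (at obm)
            \<and> ((\<lambda>x. L_DKL 1 1 obm obn x obn) has_derivative (\<lambda>h. g \<bullet> h)) (at obm)"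
  proof (intro exI conjI)
    have kl: "(\<lambda>x. L_KL x obn) = (\<lambda>x. \<Sum>j\<in>UNIV. softmax x $ j * (ln (softmax x $ j) - ln (t $ j)))"
      by (rule ext) (simp add: L_KL_def t_def ln_div softmax_pos)
    have "((\<lambda>x. \<Sum>j\<in>UNIV. softmax x $ j * (ln (softmax x $ j) - ln (t $ j))) has_derivative
       (\<lambda>h. \<Sum>j\<in>UNIV. s $ j * (h $ j - (\<Sum>i\<in>UNIV. s $ i * h $ i)) * (ln (s $ j) - ln (t $ j))
            + s $ j * (h $ j - (\<Sum>i\<in>UNIV. s $ i * h $ i)))) (at obm)"
      unfolding s_def
      by (auto intro!: derivative_eq_intros sm_deriv lnsm_deriv sum.cong ext simp: softmax_pos field_simps)
    moreover have "(\<lambda>h. \<Sum>j\<in>UNIV. s $ j * (h $ j - (\<Sum>i\<in>UNIV. s $ i * h $ i)) * (ln (s $ j) - ln (t $ j))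
            + s $ j * (h $ j - (\<Sum>i\<in>UNIV. s $ i * h $ i))) = (\<lambda>h. g \<bullet> h)"
    proof
      fix h :: "real^'c"
      define H where "H = (\<Sum>i\<in>UNIV. s $ i * h $ i)"
      define c where "c = ln (SE obn) - ln (SE obm)"
      have l: "ln (s $ j) - ln (t $ j) = a j + c" for j
        by (simp add: s_def t_def ln_softmax a_def c_def)
      have "(\<Sum>j\<in>UNIV. s $ j * (h $ j - H) * (ln (s $ j) - ln (t $ j)) + s $ j * (h $ j - H))
         = (\<Sum>j\<in>UNIV. s $ j * a j * h $ j) - A * H + (c + 1) * ((\<Sum>j\<in>UNIV. s $ j * h $ j) - H * (\<Sum>j\<in>UNIV. s $ j))"
        unfolding l A_def
        by (simp add: algebra_simps sum.distrib sum_subtractf sum_distrib_left sum_distrib_right)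
      also have "\<dots> = g \<bullet> h" using ssum by (simp add: gi H_def)
      finally show "(\<Sum>j\<in>UNIV. s $ j * (h $ j - (\<Sum>i\<in>UNIV. s $ i * h $ i)) * (ln (s $ j) - ln (t $ j))
            + s $ j * (h $ j - (\<Sum>i\<in>UNIV. s $ i * h $ i))) = g \<bullet> h" unfolding H_def .
    qed
    ultimately show "((\<lambda>x. L_KL x obn) has_derivative (\<lambda>h. g \<bullet> h)) (at obm)"
      unfolding kl by simp
    have "((\<lambda>x. L_DKL 1 1 obm obn x obn) has_derivative
       (\<lambda>h. 1/4 * (\<Sum>j\<in>UNIV. \<Sum>k\<in>UNIV. (s $ j * s $ k) *
        (2 * ((obm $ j - obm $ k) - (obn $ j - obn $ k)) * (h $ j - h $ k))))) (at obm)"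
      unfolding L_DKL_def s_def
      by (auto intro!: derivative_eq_intros simp: power2_eq_square algebra_simps)
    moreover have "(\<lambda>h. 1/4 * (\<Sum>j\<in>UNIV. \<Sum>k\<in>UNIV. (s $ j * s $ k) *
        (2 * ((obm $ j - obm $ k) - (obn $ j - obn $ k)) * (h $ j - h $ k)))) = (\<lambda>h. g \<bullet> h)"
    proof
      fix h :: "real^'c"
      have "(\<Sum>j\<in>UNIV. \<Sum>k\<in>UNIV. (s $ j * s $ k) *
        (2 * ((obm $ j - obm $ k) - (obn $ j - obn $ k)) * (h $ j - h $ k)))
        = 2 * (\<Sum>j\<in>UNIV. \<Sum>k\<in>UNIV. s $ j * s $ k * ((a j - a k) * (h $ j - h $ k)))"
        by (simp add: sum_distrib_left a_def algebra_simps)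
      also have "\<dots> = 2 * (2 * (\<Sum>j\<in>UNIV. s $ j * a j * h $ j) - 2 * A * (\<Sum>k\<in>UNIV. s $ k * h $ k))"
        using sum_sq_expand[of "\<lambda>j. s $ j" a "\<lambda>j. h $ j", OF ssum] by (simp add: A_def)
      finally show "1/4 * (\<Sum>j\<in>UNIV. \<Sum>k\<in>UNIV. (s $ j * s $ k) *
        (2 * ((obm $ j - obm $ k) - (obn $ j - obn $ k)) * (h $ j - h $ k))) = g \<bullet> h"
        by (simp add: gi)
    qed
    ultimately show "((\<lambda>x. L_DKL 1 1 obm obn x obn) has_derivative (\<lambda>h. g \<bullet> h)) (at obm)"
      by simp
  qed
next
  define s where "s = softmax obm"
  define t where "t = softmax obn"
  have ssum: "(\<Sum>j\<in>UNIV. s $ j) = 1" unfolding s_def by (rule softmax_sum)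
  define g where "g = (\<chi> j. t $ j - s $ j)"
  have d: "((\<lambda>y. \<Sum>j\<in>UNIV. s $ j * ln (softmax y $ j)) has_derivative (\<lambda>h. - (g \<bullet> h))) (at obn)"
  proof -
    have "((\<lambda>y. \<Sum>j\<in>UNIV. s $ j * ln (softmax y $ j)) has_derivative
       (\<lambda>h. \<Sum>j\<in>UNIV. s $ j * (h $ j - (\<Sum>i\<in>UNIV. t $ i * h $ i)))) (at obn)"
      unfolding t_def by (auto intro!: derivative_eq_intros sm_deriv sum.cong ext simp: softmax_pos field_simps)
    moreover have "(\<lambda>h. \<Sum>j\<in>UNIV. s $ j * (h $ j - (\<Sum>i\<in>UNIV. t $ i * h $ i))) = (\<lambda>h. - (g \<bullet> h))"
    proof
      fix h :: "real^'c"
      have "(\<Sum>j\<in>UNIV. s $ j * (h $ j - (\<Sum>i\<in>UNIV. t $ i * h $ i)))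
          = (\<Sum>j\<in>UNIV. s $ j * h $ j) - (\<Sum>j\<in>UNIV. s $ j) * (\<Sum>i\<in>UNIV. t $ i * h $ i)"
        by (simp add: algebra_simps sum_subtractf sum_distrib_right)
      then show "(\<Sum>j\<in>UNIV. s $ j * (h $ j - (\<Sum>i\<in>UNIV. t $ i * h $ i))) = - (g \<bullet> h)"
        using ssum by (simp add: g_def inner_vec_def algebra_simps sum_subtractf)
    qed
    ultimately show ?thesis by simp
  qed
  show "\<exists>g. ((\<lambda>y. L_KL obm y) has_derivative (\<lambda>h. g \<bullet> h)) (at obn)
            \<and> ((\<lambda>y. L_DKL 1 1 obm obn obm y) has_derivative (\<lambda>h. g \<bullet> h)) (at obn)"
  proof (intro exI conjI)
    have e1: "(\<lambda>y. L_KL obm y) = (\<lambda>y. (\<Sum>j\<in>UNIV. s $ j * ln (s $ j)) - (\<Sum>j\<in>UNIV. s $ j * ln (softmax y $ j)))"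
      by (rule ext) (simp add: L_KL_def s_def ln_div softmax_pos algebra_simps sum_subtractf)
    show "((\<lambda>y. L_KL obm y) has_derivative (\<lambda>h. g \<bullet> h)) (at obn)"
      unfolding e1 using has_derivative_diff[OF has_derivative_const d] by simp
    have e2: "(\<lambda>y. L_DKL 1 1 obm obn obm y) = (\<lambda>y. 1/4 * (\<Sum>j\<in>UNIV. \<Sum>k\<in>UNIV.
        (softmax obm $ j * softmax obm $ k) *
        ((obm $ j - obm $ k) - (obn $ j - obn $ k))\<^sup>2) - (\<Sum>j\<in>UNIV. s $ j * ln (softmax y $ j)))"
      by (rule ext) (simp add: L_DKL_def s_def)
    show "((\<lambda>y. L_DKL 1 1 obm obn obm y) has_derivative (\<lambda>h. g \<bullet> h)) (at obn)"
      unfolding e2 using has_derivative_diff[OF has_derivative_const d] by simp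
  qed
qed

end
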